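(* Let $n_1,\dots,n_d\ge 1$ and let $C\subseteq\mathrm{HS}(n_1,\dots,n_d)$ be a code with $M=|C|\ge 1$ codewords such that $d(x,y)\ge\delta$ for all distinct $x,y\in C$, where $\delta>0$. Put $r=1-\sum_{i=1}^d (d\,n_i)^{-1}$ and suppose $rd<\delta$. Then \[M\le\left\lfloor\frac{\delta}{\delta-rd}\right\rfloor.\]
   Context: For an integer $m$ let $[m]=\{0,\dots,m-1\}$. The cuboidal Hamming space $\mathrm{HS}(n_1,\dots,n_d)$ is $[n_1]\times\cdots\times[n_d]$ with Hamming distance $d(x,y)=|\{i:x_i\ne y_i\}|$. *)

theory Defs
  imports Main Complex_Main
begin

text \<open>The cuboidal Hamming space HS(n_1,...,n_d): words of length d (lists) whose
  i-th letter lies in [n_i] = {0..<n_i} (0-based index i < d).\<close>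
definition hamming_space :: "nat \<Rightarrow> (nat \<Rightarrow> nat) \<Rightarrow> nat list set" where
  "hamming_space d n = {x. length x = d \<and> (\<forall>i<d. x ! i < n i)}"

definition hamming_dist :: "nat list \<Rightarrow> nat list \<Rightarrow> nat" where
  "hamming_dist x y = card {i. i < length x \<and> x ! i \<noteq> y ! i}"

end

theory Submission
  imports Defs
begin

lemma sq_sum_bound:
  fixes m :: "nat \<Rightarrow> real"
  assumes "finite A" "card A > 0"
  shows "(\<Sum>a\<in>A. m a)^2 / real (card A) \<le> (\<Sum>a\<in>A. (m a)^2)"
proof -
  define s where "s = (\<Sum>a\<in>A. m a)"
  define k where "k = real (card A)"
  have kpos: "k > 0" using assms k_def by simp
  have "0 \<le> (\<Sum>a\<in>A. (m a - s / k)^2)" by (simp add: sum_nonneg)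
  also have "\<dots> = (\<Sum>a\<in>A. (m a)^2 - 2 * (s/k) * m a + (s/k)^2)"
    by (intro sum.cong refl) (simp add: power2_diff)
  also have "\<dots> = (\<Sum>a\<in>A. (m a)^2) - 2 * (s/k) * s + k * (s/k)^2"
  proof -
    have a: "(\<Sum>a\<in>A. 2 * (s/k) * m a) = 2 * (s/k) * s"
      unfolding s_def by (rule sum_distrib_left[symmetric])
    have b: "(\<Sum>a\<in>A. (s/k)^2) = k * (s/k)^2" by (simp add: k_def)
    show ?thesis using a b by (simp add: sum.distrib sum_subtractf)
  qed
  also have "\<dots> = (\<Sum>a\<in>A. (m a)^2) - s^2 / k"
    using kpos by (simp add: field_simps power2_eq_square)
  finally show ?thesis unfolding s_def k_def by simp
qed

lemma coord_eq_sum: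
  fixes C :: "nat list set"
  assumes fC: "finite C" and fA: "finite A" and sub: "(\<lambda>x. x ! i) ` C \<subseteq> A"
  shows "(\<Sum>x\<in>C. \<Sum>y\<in>C. (of_bool (x!i = y!i) :: real))
        = (\<Sum>a\<in>A. (real (card {x. x \<in> C \<and> x ! i = a}))^2)"
proof -
  let ?m = "\<lambda>a. real (card {x. x \<in> C \<and> x ! i = a})"
  have "(\<Sum>x\<in>C. \<Sum>y\<in>C. (of_bool (x!i = y!i) :: real)) = (\<Sum>x\<in>C. ?m (x!i))"
  proof (rule sum.cong[OF refl])
    fix x assume "x \<in> C"
    have "C \<inter> {y. x ! i = y ! i} = {y. y \<in> C \<and> y ! i = x ! i}" by auto
    then show "(\<Sum>y\<in>C. (of_bool (x!i = y!i) :: real)) = ?m (x!i)"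
      using fC by simp
  qed
  also have "\<dots> = (\<Sum>a\<in>A. \<Sum>x\<in>{x. x \<in> C \<and> x ! i = a}. ?m (x!i))"
    using sum.group[OF fC fA sub, of "\<lambda>x. ?m (x!i)"] by simp
  also have "\<dots> = (\<Sum>a\<in>A. (?m a)^2)"
    by (rule sum.cong[OF refl]) (simp add: power2_eq_square)
  finally show ?thesis .
qed

lemma coord_neq_bound:
  fixes C :: "nat list set"
  assumes fC: "finite C" and pos: "N \<ge> 1" and sub: "\<forall>x\<in>C. x ! i < N"
  shows "(\<Sum>x\<in>C. \<Sum>y\<in>C. (of_bool (x!i \<noteq> y!i) :: real))
        \<le> real (card C)^2 * (1 - 1 / real N)"
proof -
  let ?m = "\<lambda>a. real (card {x. x \<in> C \<and> x ! i = a})"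
  have s1: "(\<lambda>x. x ! i) ` C \<subseteq> {..<N}" using sub by auto
  have eq: "(\<Sum>x\<in>C. \<Sum>y\<in>C. (of_bool (x!i = y!i) :: real)) = (\<Sum>a\<in>{..<N}. (?m a)^2)"
    by (rule coord_eq_sum[OF fC _ s1]) simp
  have tot: "(\<Sum>a\<in>{..<N}. ?m a) = real (card C)"
  proof -
    have "(\<Sum>a\<in>{..<N}. ?m a) = (\<Sum>a\<in>{..<N}. \<Sum>x\<in>{x. x \<in> C \<and> x ! i = a}. (1::real))"
      by simp
    also have "\<dots> = (\<Sum>x\<in>C. (1::real))"
      by (rule sum.group[OF fC _ s1]) simp
    finally show ?thesis by simp
  qed
  have cs: "(\<Sum>a\<in>{..<N}. ?m a)^2 / real (card {..<N::nat}) \<le> (\<Sum>a\<in>{..<N}. (?m a)^2)"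
    by (rule sq_sum_bound) (use pos in auto)
  have cs2: "real (card C)^2 / real N \<le> (\<Sum>x\<in>C. \<Sum>y\<in>C. (of_bool (x!i = y!i) :: real))"
    using cs tot eq by simp
  have split: "(\<Sum>x\<in>C. \<Sum>y\<in>C. (of_bool (x!i \<noteq> y!i) :: real))
     = (\<Sum>x\<in>C. \<Sum>y\<in>C. (1::real)) - (\<Sum>x\<in>C. \<Sum>y\<in>C. (of_bool (x!i = y!i) :: real))"
  proof -
    have "(\<Sum>x\<in>C. \<Sum>y\<in>C. (of_bool (x!i \<noteq> y!i) :: real))
       = (\<Sum>x\<in>C. \<Sum>y\<in>C. 1 - (of_bool (x!i = y!i) :: real))"
      by (intro sum.cong refl) simp
    also have "\<dots> = (\<Sum>x\<in>C. \<Sum>y\<in>C. (1::real)) - (\<Sum>x\<in>C. \<Sum>y\<in>C. (of_bool (x!i = y!i) :: real))"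
      by (simp add: sum_subtractf)
    finally show ?thesis .
  qed
  have "(\<Sum>x\<in>C. \<Sum>y\<in>C. (1::real)) = real (card C)^2" by (simp add: power2_eq_square)
  then show ?thesis using split cs2 by (simp add: algebra_simps)
qed

theorem mainTheorem10:
  fixes d :: nat and n :: "nat \<Rightarrow> nat" and C :: "nat list set" and \<delta> r :: real
  assumes n_pos: "\<forall>i<d. n i \<ge> 1"
    and C_sub: "C \<subseteq> hamming_space d n"
    and C_ne: "card C \<ge> 1"
    and dist: "\<forall>x\<in>C. \<forall>y\<in>C. x \<noteq> y \<longrightarrow> real (hamming_dist x y) \<ge> \<delta>"
    and delta_pos: "\<delta> > 0"
    and r_def: "r = 1 - (\<Sum>i<d. 1 / (real d * real (n i)))"
    and rd: "r * real d < \<delta>"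
  shows "card C \<le> \<lfloor>\<delta> / (\<delta> - r * real d)\<rfloor>"
proof -
  have fC: "finite C" using C_ne by (metis card.infinite not_one_le_zero)
  define M where "M = real (card C)"
  have Mpos: "M \<ge> 1" using C_ne M_def by simp
  have rdeq: "r * real d = (\<Sum>i<d. (1 - 1 / real (n i)))"
  proof (cases "d = 0")
    case True then show ?thesis by simp
  next
    case False
    have "r * real d = real d - (\<Sum>i<d. 1 / (real d * real (n i))) * real d"
      by (simp add: r_def algebra_simps)
    also have "(\<Sum>i<d. 1 / (real d * real (n i))) * real d = (\<Sum>i<d. 1 / real (n i))"
      by (simp add: sum_distrib_right)
    finally show ?thesis by (simp add: sum_subtractf)
  qed
  have hd: "real (hamming_dist x y) = (\<Sum>i<d. (of_bool (x!i \<noteq> y!i) :: real))"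
    if "x \<in> C" for x y
  proof -
    have "length x = d" using that C_sub by (auto simp: hamming_space_def)
    then have "{i. i < length x \<and> x ! i \<noteq> y ! i} = {..<d} \<inter> {i. x!i \<noteq> y!i}" by auto
    then show ?thesis by (simp add: hamming_dist_def)
  qed
  have upper: "(\<Sum>x\<in>C. \<Sum>y\<in>C. real (hamming_dist x y)) \<le> M^2 * (r * real d)"
  proof -
    have "(\<Sum>x\<in>C. \<Sum>y\<in>C. real (hamming_dist x y))
        = (\<Sum>x\<in>C. \<Sum>y\<in>C. \<Sum>i<d. (of_bool (x!i \<noteq> y!i) :: real))"
      using hd by simp
    also have "\<dots> = (\<Sum>i<d. \<Sum>x\<in>C. \<Sum>y\<in>C. (of_bool (x!i \<noteq> y!i) :: real))"
    proof -
      have "(\<Sum>x\<in>C. \<Sum>y\<in>C. \<Sum>i<d. (of_bool (x!i \<noteq> y!i) :: real))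
          = (\<Sum>x\<in>C. \<Sum>i<d. \<Sum>y\<in>C. (of_bool (x!i \<noteq> y!i) :: real))"
        by (intro sum.cong refl) (rule sum.swap)
      also have "\<dots> = (\<Sum>i<d. \<Sum>x\<in>C. \<Sum>y\<in>C. (of_bool (x!i \<noteq> y!i) :: real))"
        by (rule sum.swap)
      finally show ?thesis .
    qed
    also have "\<dots> \<le> (\<Sum>i<d. M^2 * (1 - 1 / real (n i)))"
    proof (rule sum_mono)
      fix i assume "i \<in> {..<d}"
      then have "n i \<ge> 1" "\<forall>x\<in>C. x ! i < n i" using n_pos C_sub
        by (auto simp: hamming_space_def)
      then show "(\<Sum>x\<in>C. \<Sum>y\<in>C. (of_bool (x!i \<noteq> y!i) :: real)) \<le> M^2 * (1 - 1 / real (n i))"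
        using coord_neq_bound[OF fC] M_def by blast
    qed
    also have "\<dots> = M^2 * (r * real d)" by (simp add: rdeq sum_distrib_left)
    finally show ?thesis .
  qed
  have lower: "M * (M - 1) * \<delta> \<le> (\<Sum>x\<in>C. \<Sum>y\<in>C. real (hamming_dist x y))"
  proof -
    have "(\<Sum>x\<in>C. (M - 1) * \<delta>) \<le> (\<Sum>x\<in>C. \<Sum>y\<in>C. real (hamming_dist x y))"
    proof (rule sum_mono)
      fix x assume xC: "x \<in> C"
      have "(\<Sum>y\<in>C - {x}. \<delta>) \<le> (\<Sum>y\<in>C - {x}. real (hamming_dist x y))"
        by (rule sum_mono) (use dist xC in auto)
      also have "\<dots> \<le> (\<Sum>y\<in>C. real (hamming_dist x y))"
        by (rule sum_mono2[OF fC]) auto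
      finally show "(M - 1) * \<delta> \<le> (\<Sum>y\<in>C. real (hamming_dist x y))"
        using xC fC by (simp add: M_def card_Diff_singleton of_nat_diff)
          (use C_ne in \<open>simp add: of_nat_diff\<close>)
    qed
    then show ?thesis by (simp add: M_def)
  qed
  have key: "M * (M - 1) * \<delta> \<le> M^2 * (r * real d)" using upper lower by linarith
  then have "(M - 1) * \<delta> \<le> M * (r * real d)"
    using Mpos by (simp add: power2_eq_square mult.assoc)
  then have "M * (\<delta> - r * real d) \<le> \<delta>" by (simp add: algebra_simps)
  then have "M \<le> \<delta> / (\<delta> - r * real d)" using rd by (simp add: field_simps)
  then have "real_of_int (int (card C)) \<le> \<delta> / (\<delta> - r * real d)" by (simp add: M_def)
  then show ?thesis by (simp add: le_floor_iff)
qed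

end
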